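(* Let $k\ge1$ and let $\bar\lambda_1,\dots,\bar\lambda_k$ be nonzero. For generic $(\bar m_1,\dots,\bar m_{k+1})\in\mathbb{C}^{k+1}$, the polynomial system \[ g_i(\mu,s):=\sum_{\ell=1}^k \bar\lambda_\ell\, M_i(\mu_\ell,s)-\bar m_i=0,\qquad i=1,\dots,k+1, \] in the $k+1$ unknowns $\mu_1,\dots,\mu_k,s$ has only finitely many complex solutions.
   Context: Define polynomials $M_i(\mu,s)$ for $i\ge 0$ by $M_0=1$, $M_1=\mu$, $M_i=\mu M_{i-1}+(i-1)\,s\,M_{i-2}$ for $i\ge2$ ($M_i(\mu,\sigma^2)$ is the $i$-th moment of $\mathcal N(\mu,\sigma^2)$). Here all components share a common unknown variance $s=\sigma^2$. "Generic" means outside a proper Zariski-closed subset of parameter space. *)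

theory Defs
  imports Complex_Main
begin

text \<open>Gaussian moment polynomials: M 0 = 1, M 1 = mu, M i = mu M (i-1) + (i-1) s M (i-2).\<close>
fun gmom :: "nat \<Rightarrow> complex \<Rightarrow> complex \<Rightarrow> complex" where
  "gmom 0 mu s = 1"
| "gmom (Suc 0) mu s = mu"
| "gmom (Suc (Suc i)) mu s = mu * gmom (Suc i) mu s + of_nat (Suc i) * s * gmom i mu s"

text \<open>Multivariate complex polynomials in the variables indexed by a finite set V,
  given by a coefficient function on exponent vectors with finite support.\<close>
definition is_mpoly :: "nat set \<Rightarrow> ((nat \<Rightarrow> nat) \<Rightarrow> complex) \<Rightarrow> bool" where
  "is_mpoly V c \<longleftrightarrow> finite {\<alpha>. c \<alpha> \<noteq> 0} \<and>
     (\<forall>\<alpha>. c \<alpha> \<noteq> 0 \<longrightarrow> (\<forall>i. i \<notin> V \<longrightarrow> \<alpha> i = 0))"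

definition mpoly_eval :: "nat set \<Rightarrow> ((nat \<Rightarrow> nat) \<Rightarrow> complex) \<Rightarrow> (nat \<Rightarrow> complex) \<Rightarrow> complex" where
  "mpoly_eval V c x = (\<Sum>\<alpha>\<in>{\<alpha>. c \<alpha> \<noteq> 0}. c \<alpha> * (\<Prod>i\<in>V. x i ^ \<alpha> i))"

text \<open>A property holds generically on C^V (V finite) if it holds outside the zero set of a
  nonzero polynomial, i.e. outside a proper Zariski-closed subset.\<close>
definition generic_on :: "nat set \<Rightarrow> ((nat \<Rightarrow> complex) \<Rightarrow> bool) \<Rightarrow> bool" where
  "generic_on V P \<longleftrightarrow> (\<exists>c. is_mpoly V c \<and> c \<noteq> (\<lambda>_. 0) \<and>
      (\<forall>x. mpoly_eval V c x \<noteq> 0 \<longrightarrow> P x))"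

definition moment_solutions ::
  "nat \<Rightarrow> (nat \<Rightarrow> complex) \<Rightarrow> (nat \<Rightarrow> complex) \<Rightarrow> ((nat \<Rightarrow> complex) \<times> complex) set" where
  "moment_solutions k lam m = {(mu, s). (\<forall>l. l \<notin> {1..k} \<longrightarrow> mu l = 0) \<and>
      (\<forall>i\<in>{1..k+1}. (\<Sum>l=1..k. lam l * gmom i (mu l) s) - m i = 0)}"

end

theory Submission
  imports Defs "HOL-Computational_Algebra.Polynomial" "HOL-Library.Function_Algebras" "HOL-Library.FuncSet"
begin

definition mon :: "nat set \<Rightarrow> (nat \<Rightarrow> nat) \<Rightarrow> (nat \<Rightarrow> complex) \<Rightarrow> complex" where
  "mon V \<alpha> x = (\<Prod>i\<in>V. x i ^ \<alpha> i)"

lemma eval_mono: "mpoly_eval V c x = (\<Sum>\<alpha>\<in>{\<alpha>. c \<alpha> \<noteq> 0}. c \<alpha> * mon V \<alpha> x)"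
  unfolding mpoly_eval_def mon_def ..

lemma eval_superset:
  assumes "finite S" "{\<alpha>. c \<alpha> \<noteq> 0} \<subseteq> S"
  shows "mpoly_eval V c x = (\<Sum>\<alpha>\<in>S. c \<alpha> * mon V \<alpha> x)"
  unfolding eval_mono using assms by (intro sum.mono_neutral_left) auto

lemma eval_cong:
  assumes "\<And>i. i \<in> V \<Longrightarrow> x i = y i"
  shows "mpoly_eval V c x = mpoly_eval V c y"
  unfolding mpoly_eval_def using assms by (intro sum.cong prod.cong refl) auto

lemma eval_zero: "mpoly_eval V (\<lambda>_. 0) x = 0"
  unfolding mpoly_eval_def by simp

definition rep :: "nat set \<Rightarrow> nat \<Rightarrow> ((nat \<Rightarrow> complex) \<Rightarrow> complex) \<Rightarrow> bool" where
  "rep V K f \<longleftrightarrow> (\<exists>c. is_mpoly V c \<and> (\<forall>\<alpha>. c \<alpha> \<noteq> 0 \<longrightarrow> (\<forall>i. \<alpha> i \<le> K)) \<and> f = mpoly_eval V c)"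

lemma rep_mono_term:
  assumes "\<And>i. \<alpha> i \<le> K" "\<And>i. i \<notin> V \<Longrightarrow> \<alpha> i = 0"
  shows "rep V K (\<lambda>x. a * mon V \<alpha> x)"
proof -
  define c where "c = (\<lambda>\<beta>. if \<beta> = \<alpha> then a else 0)"
  have s: "{\<beta>. c \<beta> \<noteq> 0} \<subseteq> {\<alpha>}" by (auto simp: c_def)
  hence "finite {\<beta>. c \<beta> \<noteq> 0}" by (rule finite_subset) auto
  moreover have "mpoly_eval V c x = a * mon V \<alpha> x" for x
    using eval_superset[OF _ s] by (simp add: c_def)
  ultimately show ?thesis unfolding rep_def is_mpoly_def using assms
    by (intro exI[of _ c]) (auto simp: c_def)
qed

lemma mono_zero: "mon V (\<lambda>_. 0) x = 1" by (simp add: mon_def)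

lemma rep_const: "rep V K (\<lambda>x. a)"
  using rep_mono_term[of "\<lambda>_. 0" K V a] by (simp add: mono_zero)

lemma rep_add:
  assumes "rep V K f" "rep V K g"
  shows "rep V K (\<lambda>x. f x + g x)"
proof -
  obtain c where c: "is_mpoly V c" "\<forall>\<alpha>. c \<alpha> \<noteq> 0 \<longrightarrow> (\<forall>i. \<alpha> i \<le> K)" "f = mpoly_eval V c"
    using assms(1) unfolding rep_def by blast
  obtain d where d: "is_mpoly V d" "\<forall>\<alpha>. d \<alpha> \<noteq> 0 \<longrightarrow> (\<forall>i. \<alpha> i \<le> K)" "g = mpoly_eval V d"
    using assms(2) unfolding rep_def by blast
  define S where "S = {\<alpha>. c \<alpha> \<noteq> 0} \<union> {\<alpha>. d \<alpha> \<noteq> 0}"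
  have fS: "finite S" using c(1) d(1) by (auto simp: S_def is_mpoly_def)
  have sub: "{\<alpha>. c \<alpha> + d \<alpha> \<noteq> 0} \<subseteq> S" by (auto simp: S_def)
  have "is_mpoly V (\<lambda>\<alpha>. c \<alpha> + d \<alpha>)"
    unfolding is_mpoly_def
  proof (intro conjI allI impI)
    show "finite {\<alpha>. c \<alpha> + d \<alpha> \<noteq> 0}" using fS sub by (rule finite_subset[rotated])
  next
    fix \<alpha> i assume "c \<alpha> + d \<alpha> \<noteq> 0" "i \<notin> V"
    then have "c \<alpha> \<noteq> 0 \<or> d \<alpha> \<noteq> 0" by auto
    then show "\<alpha> i = 0" using c(1) d(1) \<open>i \<notin> V\<close> unfolding is_mpoly_def by blast
  qed
  moreover have "\<forall>\<alpha>. c \<alpha> + d \<alpha> \<noteq> 0 \<longrightarrow> (\<forall>i. \<alpha> i \<le> K)"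
  proof (intro allI impI)
    fix \<alpha> i assume "c \<alpha> + d \<alpha> \<noteq> 0"
    then have "c \<alpha> \<noteq> 0 \<or> d \<alpha> \<noteq> 0" by auto
    then show "\<alpha> i \<le> K" using c(2) d(2) by blast
  qed
  moreover have "(\<lambda>x. f x + g x) = mpoly_eval V (\<lambda>\<alpha>. c \<alpha> + d \<alpha>)"
  proof
    fix x
    have "f x = (\<Sum>\<alpha>\<in>S. c \<alpha> * mon V \<alpha> x)" unfolding c(3)
      by (rule eval_superset[OF fS]) (auto simp: S_def)
    moreover have "g x = (\<Sum>\<alpha>\<in>S. d \<alpha> * mon V \<alpha> x)" unfolding d(3)
      by (rule eval_superset[OF fS]) (auto simp: S_def)
    moreover have "mpoly_eval V (\<lambda>\<alpha>. c \<alpha> + d \<alpha>) x = (\<Sum>\<alpha>\<in>S. (c \<alpha> + d \<alpha>) * mon V \<alpha> x)"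
      by (rule eval_superset[OF fS sub])
    ultimately show "f x + g x = mpoly_eval V (\<lambda>\<alpha>. c \<alpha> + d \<alpha>) x"
      by (simp add: distrib_right sum.distrib)
  qed
  ultimately show ?thesis unfolding rep_def by blast
qed

lemma rep_sum:
  assumes "finite I" "\<And>i. i \<in> I \<Longrightarrow> rep V K (f i)"
  shows "rep V K (\<lambda>x. \<Sum>i\<in>I. f i x)"
  using assms
proof (induction I rule: finite_induct)
  case empty then show ?case using rep_const[of V K 0] by simp
next
  case (insert a I)
  then show ?case using rep_add[of V K "f a" "\<lambda>x. \<Sum>i\<in>I. f i x"] by simp
qed

lemma mono_add: "mon V (\<lambda>i. \<alpha> i + \<beta> i) x = mon V \<alpha> x * mon V \<beta> x"
  by (simp add: mon_def power_add prod.distrib)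

lemma rep_mult:
  assumes "rep V K1 f" "rep V K2 g"
  shows "rep V (K1 + K2) (\<lambda>x. f x * g x)"
proof -
  obtain c where c: "is_mpoly V c" "\<forall>\<alpha>. c \<alpha> \<noteq> 0 \<longrightarrow> (\<forall>i. \<alpha> i \<le> K1)" "f = mpoly_eval V c"
    using assms(1) unfolding rep_def by blast
  obtain d where d: "is_mpoly V d" "\<forall>\<alpha>. d \<alpha> \<noteq> 0 \<longrightarrow> (\<forall>i. \<alpha> i \<le> K2)" "g = mpoly_eval V d"
    using assms(2) unfolding rep_def by blast
  have e: "f x * g x = (\<Sum>\<alpha>\<in>{\<alpha>. c \<alpha> \<noteq> 0}. \<Sum>\<beta>\<in>{\<beta>. d \<beta> \<noteq> 0}.
      (c \<alpha> * d \<beta>) * mon V (\<lambda>i. \<alpha> i + \<beta> i) x)" for x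
    by (simp add: c(3) d(3) eval_mono sum_product mono_add mult_ac)
  have "rep V (K1 + K2) (\<lambda>x. \<Sum>\<alpha>\<in>{\<alpha>. c \<alpha> \<noteq> 0}. \<Sum>\<beta>\<in>{\<beta>. d \<beta> \<noteq> 0}.
      (c \<alpha> * d \<beta>) * mon V (\<lambda>i. \<alpha> i + \<beta> i) x)"
    using c(1,2) d(1,2) unfolding is_mpoly_def
    by (intro rep_sum rep_mono_term) (auto intro: add_mono)
  then show ?thesis using e by simp
qed

lemma rep_mono_K:
  assumes "rep V K f" "K \<le> K'" shows "rep V K' f"
proof -
  obtain c where c: "is_mpoly V c" "\<forall>\<alpha>. c \<alpha> \<noteq> 0 \<longrightarrow> (\<forall>i. \<alpha> i \<le> K)" "f = mpoly_eval V c"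
    using assms(1) unfolding rep_def by blast
  have "\<forall>\<alpha>. c \<alpha> \<noteq> 0 \<longrightarrow> (\<forall>i. \<alpha> i \<le> K')" using c(2) assms(2) le_trans by blast
  then show ?thesis using c unfolding rep_def by blast
qed

lemma rep_var:
  assumes "finite V" "i \<in> V" "1 \<le> K"
  shows "rep V K (\<lambda>x. x i)"
proof -
  have "mon V (\<lambda>j. if j = i then 1 else 0) x = x i" for x
  proof -
    have "mon V (\<lambda>j. if j = i then 1 else 0) x = (\<Prod>j\<in>V. if j = i then x j else 1)"
      unfolding mon_def by (intro prod.cong) auto
    also have "\<dots> = x i" using assms by (simp add: prod.delta')
    finally show ?thesis .
  qed
  moreover have "\<And>j. (if j = i then 1 else 0) \<le> K" using assms by auto
  moreover have "\<And>j. j \<notin> V \<Longrightarrow> (if j = i then 1 else 0) = (0::nat)" using assms by auto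
  ultimately show ?thesis using rep_mono_term[of "\<lambda>j. if j = i then 1 else 0" K V 1] by simp
qed

lemma rep_pow:
  assumes "rep V K f" shows "rep V (n * K) (\<lambda>x. f x ^ n)"
proof (induction n)
  case 0 then show ?case using rep_const[of V 0 1] by simp
next
  case (Suc n) then show ?case using rep_mult[OF assms Suc] by (simp add: add.commute)
qed

lemma rep_prod:
  assumes "finite I" "\<And>i. i \<in> I \<Longrightarrow> rep V (K i) (f i)"
  shows "rep V (\<Sum>i\<in>I. K i) (\<lambda>x. \<Prod>i\<in>I. f i x)"
  using assms
proof (induction I rule: finite_induct)
  case empty then show ?case using rep_const[of V 0 1] by simp
next
  case (insert a I)
  then show ?case using rep_mult[of V "K a" "f a" "\<Sum>i\<in>I. K i" "\<lambda>x. \<Prod>i\<in>I. f i x"] by simp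
qed

lemma rep_gmom2:
  assumes "finite V" "l \<in> V" "0 \<in> V"
  shows "rep V i (\<lambda>x. gmom i (x l) (x 0)) \<and> rep V (Suc i) (\<lambda>x. gmom (Suc i) (x l) (x 0))"
proof (induction i)
  case 0 then show ?case using rep_const[of V 0 1] rep_var[OF assms(1,2), of 1] by simp
next
  case (Suc i)
  have a: "rep V (1 + Suc i) (\<lambda>x. x l * gmom (Suc i) (x l) (x 0))"
    using rep_mult[OF rep_var[OF assms(1,2) order_refl]] Suc by blast
  have b: "rep V (0 + 1 + i) (\<lambda>x. of_nat (Suc i) * x 0 * gmom i (x l) (x 0))"
    using rep_mult[OF rep_mult[OF rep_const rep_var[OF assms(1,3) order_refl]]] Suc by blast
  show ?case using rep_add[OF a rep_mono_K[OF b]] Suc by simp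
qed

lemma rep_gmom:
  assumes "finite V" "l \<in> V" "0 \<in> V"
  shows "rep V i (\<lambda>x. gmom i (x l) (x 0))"
  using rep_gmom2[OF assms] by blast


lemma slice:
  assumes "finite V" "v \<notin> V"
  shows "mpoly_eval (insert v V) c (x(v:=t)) =
    poly (\<Sum>\<alpha>\<in>{\<alpha>. c \<alpha> \<noteq> 0}. monom (c \<alpha> * mon V \<alpha> x) (\<alpha> v)) t"
proof -
  have m: "mon (insert v V) \<alpha> (x(v:=t)) = t ^ \<alpha> v * mon V \<alpha> x" for \<alpha>
  proof -
    have "mon (insert v V) \<alpha> (x(v:=t)) = t ^ \<alpha> v * mon V \<alpha> (x(v:=t))"
      unfolding mon_def using assms by (simp add: prod.insert)
    moreover have "mon V \<alpha> (x(v:=t)) = mon V \<alpha> x"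
      unfolding mon_def using assms by (intro prod.cong) auto
    ultimately show ?thesis by simp
  qed
  show ?thesis unfolding eval_mono poly_sum poly_monom m
    by (intro sum.cong) (auto simp: mult_ac)
qed

lemma coeff_sum_monom2:
  assumes "finite S"
  shows "coeff (\<Sum>\<alpha>\<in>S. monom (a \<alpha>) (e \<alpha>)) n = (\<Sum>\<alpha>\<in>{\<alpha>\<in>S. e \<alpha> = n}. a \<alpha>)"
  unfolding coeff_sum coeff_monom using assms by (simp add: sum.inter_filter)

lemma common_nonzero:
  assumes "finite V" "finite J" "\<forall>j\<in>J. is_mpoly V (c j) \<and> c j \<noteq> (\<lambda>_. 0)"
  shows "\<exists>x. \<forall>j\<in>J. mpoly_eval V (c j) x \<noteq> 0"
  using assms(1,3)
proof (induction V arbitrary: c rule: finite_induct)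
  case empty
  have "mpoly_eval {} (c j) x \<noteq> 0" if j: "j \<in> J" for j x
  proof -
    have z: "\<alpha> = (\<lambda>_. 0)" if "c j \<alpha> \<noteq> 0" for \<alpha>
      using empty j that unfolding is_mpoly_def by auto
    obtain \<alpha>0 where a0: "c j \<alpha>0 \<noteq> 0" using empty j by fastforce
    have nz: "c j (\<lambda>_. 0) \<noteq> 0" using a0 z[OF a0] by simp
    have "{\<alpha>. c j \<alpha> \<noteq> 0} \<subseteq> {\<lambda>_. 0}" using z by blast
    from eval_superset[OF _ this] have "mpoly_eval {} (c j) x = c j (\<lambda>_. 0) * mon {} (\<lambda>_. 0) x"
      by simp
    then show ?thesis using nz by (simp add: mon_def)
  qed
  then show ?case by blast
next
  case (insert v V)
  define q where "q j e \<alpha> = (if \<alpha> v = 0 then c j (\<alpha>(v:=e)) else 0)" for j e \<alpha>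
  have qm: "is_mpoly V (q j e)" if j: "j \<in> J" for j e
    unfolding is_mpoly_def
  proof (intro conjI allI impI)
    have "{\<alpha>. q j e \<alpha> \<noteq> 0} \<subseteq> (\<lambda>\<alpha>. \<alpha>(v:=0)) ` {\<alpha>. c j \<alpha> \<noteq> 0}"
    proof
      fix \<alpha> assume "\<alpha> \<in> {\<alpha>. q j e \<alpha> \<noteq> 0}"
      then have "\<alpha> v = 0" "c j (\<alpha>(v:=e)) \<noteq> 0" by (auto simp: q_def split: if_splits)
      moreover have "\<alpha> = (\<alpha>(v:=e))(v:=0)" using \<open>\<alpha> v = 0\<close> by auto
      ultimately show "\<alpha> \<in> (\<lambda>\<alpha>. \<alpha>(v:=0)) ` {\<alpha>. c j \<alpha> \<noteq> 0}" by blast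
    qed
    moreover have "finite {\<alpha>. c j \<alpha> \<noteq> 0}" using insert.prems j unfolding is_mpoly_def by blast
    ultimately show "finite {\<alpha>. q j e \<alpha> \<noteq> 0}" by (rule finite_subset[OF _ finite_imageI])
  next
    fix \<alpha> i assume a: "q j e \<alpha> \<noteq> 0" "i \<notin> V"
    then have av: "\<alpha> v = 0" "c j (\<alpha>(v:=e)) \<noteq> 0" by (auto simp: q_def split: if_splits)
    show "\<alpha> i = 0"
    proof (cases "i = v")
      case True then show ?thesis using av by simp
    next
      case False
      then have "(\<alpha>(v:=e)) i = 0" using insert.prems j av(2) a(2) unfolding is_mpoly_def by blast
      then show ?thesis using False by simp
    qed
  qed
  have "\<exists>e. q j e \<noteq> (\<lambda>_. 0)" if j: "j \<in> J" for j
  proof -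
    obtain \<alpha>0 where a0: "c j \<alpha>0 \<noteq> 0" using insert.prems j by fastforce
    have "q j (\<alpha>0 v) (\<alpha>0(v:=0)) = c j \<alpha>0" by (simp add: q_def)
    then show ?thesis using a0 by (intro exI[of _ "\<alpha>0 v"]) (metis)
  qed
  then obtain E where E: "\<forall>j\<in>J. q j (E j) \<noteq> (\<lambda>_. 0)" by metis
  obtain x where x: "\<forall>j\<in>J. mpoly_eval V (q j (E j)) x \<noteq> 0"
    using insert.IH[of "\<lambda>j. q j (E j)"] qm E by blast
  define p where "p j = (\<Sum>\<alpha>\<in>{\<alpha>. c j \<alpha> \<noteq> 0}. monom (c j \<alpha> * mon V \<alpha> x) (\<alpha> v))" for j
  have fin_c: "finite {\<alpha>. c j \<alpha> \<noteq> 0}" if "j \<in> J" for j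
    using insert.prems that unfolding is_mpoly_def by blast
  have pnz: "p j \<noteq> 0" if j: "j \<in> J" for j
  proof -
    let ?S = "{\<alpha> \<in> {\<alpha>. c j \<alpha> \<noteq> 0}. \<alpha> v = E j}"
    have "coeff (p j) (E j) = (\<Sum>\<alpha>\<in>?S. c j \<alpha> * mon V \<alpha> x)"
      unfolding p_def using fin_c[OF j] by (rule coeff_sum_monom2)
    also have "\<dots> = (\<Sum>\<beta>\<in>{\<beta>. q j (E j) \<beta> \<noteq> 0}. q j (E j) \<beta> * mon V \<beta> x)"
    proof (rule sum.reindex_bij_witness[where i = "\<lambda>\<beta>. \<beta>(v:=E j)" and j = "\<lambda>\<alpha>. \<alpha>(v:=0)"])
      fix \<alpha> assume a: "\<alpha> \<in> ?S"
      then show "(\<alpha>(v:=0))(v:=E j) = \<alpha>" by auto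
      have ae: "\<alpha>(v:=E j) = \<alpha>" using a by auto
      show "\<alpha>(v:=0) \<in> {\<beta>. q j (E j) \<beta> \<noteq> 0}" using a ae by (auto simp: q_def)
      have "mon V (\<alpha>(v:=0)) x = mon V \<alpha> x" unfolding mon_def using insert.hyps
        by (intro prod.cong) auto
      then show "q j (E j) (\<alpha>(v:=0)) * mon V (\<alpha>(v:=0)) x = c j \<alpha> * mon V \<alpha> x"
        using a ae by (auto simp: q_def)
    next
      fix \<beta> assume b: "\<beta> \<in> {\<beta>. q j (E j) \<beta> \<noteq> 0}"
      then have bv: "\<beta> v = 0" "c j (\<beta>(v:=E j)) \<noteq> 0" by (auto simp: q_def split: if_splits)
      then show "(\<beta>(v:=E j))(v:=0) = \<beta>" by auto
      show "\<beta>(v:=E j) \<in> ?S" using bv by auto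
    qed
    also have "\<dots> = mpoly_eval V (q j (E j)) x" by (simp add: eval_mono)
    finally show ?thesis using x j by auto
  qed
  have "finite (\<Union>j\<in>J. {t. poly (p j) t = 0})"
    using assms(2) pnz poly_roots_finite by blast
  then obtain t where t: "t \<notin> (\<Union>j\<in>J. {t. poly (p j) t = 0})"
    using ex_new_if_finite[OF infinite_UNIV_char_0] by blast
  have "mpoly_eval (insert v V) (c j) (x(v:=t)) \<noteq> 0" if "j \<in> J" for j
    using slice[OF insert.hyps(1,2), of "c j" x t] t that by (auto simp: p_def)
  then show ?case by blast
qed


definition box :: "nat set \<Rightarrow> nat \<Rightarrow> (nat \<Rightarrow> nat) set" where
  "box V K = {\<alpha>. (\<forall>i\<in>V. \<alpha> i \<le> K) \<and> (\<forall>i. i \<notin> V \<longrightarrow> \<alpha> i = 0)}"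

lemma box_bij:
  "bij_betw (\<lambda>\<alpha>. restrict \<alpha> V) (box V K) (PiE V (\<lambda>_. {..K}))"
proof (rule bij_betw_byWitness[where f' = "\<lambda>h i. if i \<in> V then h i else 0"])
  show "\<forall>a\<in>box V K. (\<lambda>i. if i \<in> V then restrict a V i else 0) = a"
    by (auto simp: box_def fun_eq_iff)
  show "\<forall>a'\<in>PiE V (\<lambda>_. {..K}). restrict (\<lambda>i. if i \<in> V then a' i else 0) V = a'"
    by (auto simp: fun_eq_iff PiE_def extensional_def)
  show "(\<lambda>\<alpha>. restrict \<alpha> V) ` box V K \<subseteq> PiE V (\<lambda>_. {..K})"
    by (auto simp: box_def)
  show "(\<lambda>h i. if i \<in> V then h i else 0) ` PiE V (\<lambda>_. {..K}) \<subseteq> box V K"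
    by (auto simp: box_def PiE_def Pi_def)
qed

lemma card_box:
  assumes "finite V"
  shows "card (box V K) = (K+1) ^ card V" "finite (box V K)"
proof -
  have "card (box V K) = card (PiE V (\<lambda>_. {..K}))" using bij_betw_same_card[OF box_bij] .
  also have "\<dots> = (K+1) ^ card V" using assms by (simp add: card_PiE)
  finally show "card (box V K) = (K+1) ^ card V" .
  show "finite (box V K)" using bij_betw_finite[OF box_bij] assms by (simp add: finite_PiE)
qed

interpretation FV: vector_space "\<lambda>(c::complex) (f::(nat\<Rightarrow>complex)\<Rightarrow>complex) x. c * f x"
  by unfold_locales (auto simp: fun_eq_iff algebra_simps)

lemma sum_fun_apply: "(\<Sum>v\<in>S. f v) x = (\<Sum>v\<in>S. f v x)"
  by (induction S rule: infinite_finite_induct) auto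

lemma rep_span:
  assumes "rep V K f"
  shows "f \<in> FV.span (mon V ` box V K)"
proof -
  obtain c where c: "is_mpoly V c" "\<forall>\<alpha>. c \<alpha> \<noteq> 0 \<longrightarrow> (\<forall>i. \<alpha> i \<le> K)" "f = mpoly_eval V c"
    using assms unfolding rep_def by blast
  have "f = (\<Sum>\<alpha>\<in>{\<alpha>. c \<alpha> \<noteq> 0}. (\<lambda>x. c \<alpha> * mon V \<alpha> x))"
    by (auto simp: fun_eq_iff sum_fun_apply c(3) eval_mono)
  also have "\<dots> \<in> FV.span (mon V ` box V K)"
  proof (rule FV.span_sum)
    fix \<alpha> assume a: "\<alpha> \<in> {\<alpha>. c \<alpha> \<noteq> 0}"
    then have "\<alpha> \<in> box V K" using c(1,2) unfolding box_def is_mpoly_def by auto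
    then have "mon V \<alpha> \<in> FV.span (mon V ` box V K)" by (intro FV.span_base) auto
    then show "(\<lambda>x. c \<alpha> * mon V \<alpha> x) \<in> FV.span (mon V ` box V K)" by (rule FV.span_scale)
  qed
  finally show ?thesis .
qed

lemma lin_dep:
  assumes "finite B" "finite T" "card T < card B" "\<forall>\<beta>\<in>B. G \<beta> \<in> FV.span T"
  shows "\<exists>u. (\<exists>\<beta>\<in>B. u \<beta> \<noteq> 0) \<and> (\<forall>x. (\<Sum>\<beta>\<in>B. u \<beta> * G \<beta> x) = 0)"
proof (cases "inj_on G B")
  case False
  then obtain b1 b2 where b: "b1 \<in> B" "b2 \<in> B" "b1 \<noteq> b2" "G b1 = G b2"
    unfolding inj_on_def by blast
  define u where "u \<beta> = (if \<beta> = b1 then 1 else 0) - (if \<beta> = b2 then (1::complex) else 0)" for \<beta>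
  have "(\<Sum>\<beta>\<in>B. u \<beta> * G \<beta> x) = 0" for x
  proof -
    have "(\<Sum>\<beta>\<in>B. u \<beta> * G \<beta> x) = (\<Sum>\<beta>\<in>B. (if \<beta> = b1 then G \<beta> x else 0) - (if \<beta> = b2 then G \<beta> x else 0))"
      by (intro sum.cong) (auto simp: u_def)
    also have "\<dots> = G b1 x - G b2 x" using b assms(1) by (simp add: sum_subtractf)
    finally show ?thesis using b by simp
  qed
  moreover have "u b1 \<noteq> 0" using b by (simp add: u_def)
  ultimately show ?thesis using b by blast
next
  case True
  have "card (G ` B) = card B" using card_image[OF True] .
  have "\<not> FV.independent (G ` B)"
  proof
    assume "FV.independent (G ` B)"
    from FV.independent_span_bound[OF assms(2) this] assms(4)
    have "card (G ` B) \<le> card T" by auto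
    then show False using \<open>card (G ` B) = card B\<close> assms(3) by simp
  qed
  then obtain t w where tw: "finite t" "t \<subseteq> G ` B"
      "(\<Sum>v\<in>t. (\<lambda>x. w v * v x)) = 0" "\<exists>v\<in>t. w v \<noteq> 0"
    unfolding FV.dependent_explicit by blast
  define u where "u \<beta> = (if G \<beta> \<in> t then w (G \<beta>) else 0)" for \<beta>
  have "(\<Sum>\<beta>\<in>B. u \<beta> * G \<beta> x) = 0" for x
  proof -
    have "(\<Sum>\<beta>\<in>B. u \<beta> * G \<beta> x) = (\<Sum>\<beta>\<in>{\<beta>\<in>B. G \<beta> \<in> t}. w (G \<beta>) * G \<beta> x)"
      using assms(1) by (simp add: u_def sum.inter_filter if_distrib[of "\<lambda>a. a * _"] cong: if_cong)
    also have "\<dots> = (\<Sum>v\<in>G ` {\<beta>\<in>B. G \<beta> \<in> t}. w v * v x)"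
      using True by (subst sum.reindex) (auto intro: inj_on_subset)
    also have "G ` {\<beta>\<in>B. G \<beta> \<in> t} = t" using tw(2) by auto
    also have "(\<Sum>v\<in>t. w v * v x) = (\<Sum>v\<in>t. (\<lambda>x. w v * v x)) x" by (simp add: sum_fun_apply)
    also have "\<dots> = 0" using tw(3) by simp
    finally show ?thesis .
  qed
  moreover obtain v where "v \<in> t" "w v \<noteq> 0" using tw(4) by blast
  then obtain \<beta> where "\<beta> \<in> B" "G \<beta> = v" using tw(2) by blast
  then have "u \<beta> \<noteq> 0" using \<open>v \<in> t\<close> \<open>w v \<noteq> 0\<close> by (simp add: u_def)
  ultimately show ?thesis using \<open>\<beta> \<in> B\<close> by blast
qed


lemma mon_insert:
  assumes "finite V" "v \<notin> V"
  shows "mon (insert v V) \<beta> z = z v ^ \<beta> v * mon V \<beta> z"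
  unfolding mon_def using assms by (simp add: prod.insert)

theorem mainTheorem6:
  fixes k :: nat and lam :: "nat \<Rightarrow> complex"
  assumes "k \<ge> 1"
    and "\<forall>l\<in>{1..k}. lam l \<noteq> 0"
  shows "generic_on {1..k+1} (\<lambda>m. finite (moment_solutions k lam m))"
proof -
  define V where "V = {1..k+1}"
  define X where "X = {0..k}"
  define W where "W = insert 0 V"
  have fV: "finite V" "0 \<notin> V" "card V = k+1" by (auto simp: V_def)
  have fX: "finite X" "card X = k+1" "0 \<in> X" by (auto simp: X_def)
  have fW: "finite W" "card W = k+2" using fV by (auto simp: W_def)
  define F where "F i x = (\<Sum>l=1..k. lam l * gmom i (x l) (x 0))" for i and x :: "nat \<Rightarrow> complex"
  define cc where "cc = 1 + (k+1)*(k+1)"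
  define D where "D = cc ^ (k+1)"
  define K where "K = D * cc"
  define B where "B = box W D"
  define G where "G j \<beta> x = x j ^ \<beta> 0 * (\<Prod>i\<in>V. F i x ^ \<beta> i)" for j \<beta> and x :: "nat \<Rightarrow> complex"
  have fB: "finite B" "card B = (D+1)^(k+2)" using card_box[OF fW(1)] fW by (auto simp: B_def)
  have fT: "finite (mon X ` box X K)" "card (mon X ` box X K) \<le> (K+1)^(k+1)"
    using card_box[OF fX(1), of K] fX card_image_le[of "box X K" "mon X"] by auto
  have ineq: "(K+1)^(k+1) < (D+1)^(k+2)"
  proof -
    have "K + 1 \<le> (D+1) * cc" by (simp add: K_def cc_def algebra_simps)
    then have "(K+1)^(k+1) \<le> ((D+1) * cc)^(k+1)" by (rule power_mono) simp
    also have "\<dots> = (D+1)^(k+1) * D" by (simp only: power_mult_distrib D_def[symmetric])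
    also have "\<dots> < (D+1)^(k+1) * (D+1)" by simp
    also have "\<dots> = (D+1)^(k+2)" by simp
    finally show ?thesis .
  qed
  have repF: "rep X (k+1) (F i)" if "i \<in> V" for i
  proof -
    have "rep X (k+1) (\<lambda>x. \<Sum>l\<in>{1..k}. lam l * gmom i (x l) (x 0))"
    proof (rule rep_sum)
      fix l assume "l \<in> {1..k}"
      then have "l \<in> X" by (auto simp: X_def)
      from rep_mult[OF rep_const rep_gmom[OF fX(1) this fX(3)]]
      have "rep X (0 + i) (\<lambda>x. lam l * gmom i (x l) (x 0))" .
      then show "rep X (k+1) (\<lambda>x. lam l * gmom i (x l) (x 0))"
        by (rule rep_mono_K) (use that in \<open>auto simp: V_def\<close>)
    qed simp
    then show ?thesis unfolding F_def[abs_def] by simp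
  qed
  have repG: "rep X K (G j \<beta>)" if j: "j \<in> X" and b: "\<beta> \<in> B" for j \<beta>
  proof -
    have bb: "\<beta> i \<le> D" if "i \<in> W" for i using b that by (auto simp: B_def box_def)
    have r1: "rep X (\<beta> 0 * 1) (\<lambda>x. x j ^ \<beta> 0)"
      by (rule rep_pow) (rule rep_var[OF fX(1) j order_refl])
    have r2: "rep X (\<Sum>i\<in>V. \<beta> i * (k+1)) (\<lambda>x. \<Prod>i\<in>V. F i x ^ \<beta> i)"
      by (rule rep_prod[OF fV(1)]) (rule rep_pow[OF repF])
    have "(\<Sum>i\<in>V. \<beta> i * (k+1)) \<le> (\<Sum>i\<in>V. D * (k+1))"
    proof (rule sum_mono)
      fix i assume "i \<in> V"
      then have "\<beta> i \<le> D" using bb by (auto simp: W_def)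
      then show "\<beta> i * (k+1) \<le> D * (k+1)" by (rule mult_right_mono) simp
    qed
    also have "\<dots> = (k+1) * (D * (k+1))" using fV by simp
    finally have le: "\<beta> 0 * 1 + (\<Sum>i\<in>V. \<beta> i * (k+1)) \<le> K"
      using bb[of 0] by (simp add: W_def K_def cc_def algebra_simps)
    show ?thesis using rep_mono_K[OF rep_mult[OF r1 r2] le] unfolding G_def[abs_def] by simp
  qed
  have "\<forall>j\<in>X. \<exists>u. (\<exists>\<beta>\<in>B. u \<beta> \<noteq> 0) \<and> (\<forall>x. (\<Sum>\<beta>\<in>B. u \<beta> * G j \<beta> x) = 0)"
  proof
    fix j assume j: "j \<in> X"
    show "\<exists>u. (\<exists>\<beta>\<in>B. u \<beta> \<noteq> 0) \<and> (\<forall>x. (\<Sum>\<beta>\<in>B. u \<beta> * G j \<beta> x) = 0)"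
      by (rule lin_dep[OF fB(1) fT(1)]) (use fT fB ineq repG[OF j] rep_span in auto)
  qed
  then obtain U0 where U0: "\<forall>j\<in>X. (\<exists>\<beta>\<in>B. U0 j \<beta> \<noteq> 0) \<and> (\<forall>x. (\<Sum>\<beta>\<in>B. U0 j \<beta> * G j \<beta> x) = 0)"
    by metis
  define Uc where "Uc j \<beta> = (if \<beta> \<in> B then U0 j \<beta> else 0)" for j \<beta>
  have Usupp: "{\<beta>. Uc j \<beta> \<noteq> 0} \<subseteq> B" for j by (auto simp: Uc_def split: if_splits)
  have Um: "is_mpoly W (Uc j)" for j
    unfolding is_mpoly_def
  proof (intro conjI allI impI)
    show "finite {\<beta>. Uc j \<beta> \<noteq> 0}" using finite_subset[OF Usupp fB(1)] .
  next
    fix \<alpha> i assume "Uc j \<alpha> \<noteq> 0" "i \<notin> W"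
    then have "\<alpha> \<in> B" using Usupp by blast
    then show "\<alpha> i = 0" using \<open>i \<notin> W\<close> by (auto simp: B_def box_def)
  qed
  have Unz: "Uc j \<noteq> (\<lambda>_. 0)" if "j \<in> X" for j
    using U0 that by (auto simp: Uc_def fun_eq_iff)
  define zz where "zz j x = (\<lambda>i. if i = 0 then x j else F i x)" for j and x :: "nat \<Rightarrow> complex"
  have rel: "mpoly_eval W (Uc j) (zz j x) = 0" if "j \<in> X" for j x
  proof -
    have "mpoly_eval W (Uc j) (zz j x) = (\<Sum>\<beta>\<in>B. Uc j \<beta> * mon W \<beta> (zz j x))"
      by (rule eval_superset[OF fB(1) Usupp])
    also have "\<dots> = (\<Sum>\<beta>\<in>B. U0 j \<beta> * G j \<beta> x)"
    proof (rule sum.cong[OF refl])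
      fix \<beta> assume "\<beta> \<in> B"
      have "mon V \<beta> (zz j x) = (\<Prod>i\<in>V. F i x ^ \<beta> i)"
        unfolding mon_def zz_def using fV(2) by (intro prod.cong) auto
      then show "Uc j \<beta> * mon W \<beta> (zz j x) = U0 j \<beta> * G j \<beta> x"
        using \<open>\<beta> \<in> B\<close> unfolding W_def mon_insert[OF fV(1,2)]
        by (simp add: Uc_def G_def zz_def)
    qed
    also have "\<dots> = 0" using U0 that by blast
    finally show ?thesis .
  qed
  obtain z0 where z0: "\<forall>j\<in>X. mpoly_eval W (Uc j) z0 \<noteq> 0"
    using common_nonzero[OF fW(1) fX(1), of Uc] Um Unz by blast
  define T0 where "T0 = z0 0"
  define Cf where "Cf m = (\<Prod>j\<in>X. mpoly_eval W (Uc j) (m(0:=T0)))" for m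
  have repfac: "rep V D (\<lambda>m. mpoly_eval W (Uc j) (m(0:=T0)))" for j
  proof -
    have e: "mpoly_eval W (Uc j) (m(0:=T0)) = (\<Sum>\<beta>\<in>B. (Uc j \<beta> * T0 ^ \<beta> 0) * mon V (\<beta>(0:=0)) m)" for m
    proof -
      have "mpoly_eval W (Uc j) (m(0:=T0)) = (\<Sum>\<beta>\<in>B. Uc j \<beta> * mon W \<beta> (m(0:=T0)))"
        by (rule eval_superset[OF fB(1) Usupp])
      also have "\<dots> = (\<Sum>\<beta>\<in>B. (Uc j \<beta> * T0 ^ \<beta> 0) * mon V (\<beta>(0:=0)) m)"
      proof (rule sum.cong[OF refl])
        fix \<beta>
        have "mon V \<beta> (m(0:=T0)) = mon V (\<beta>(0:=0)) m"
          unfolding mon_def using fV(2) by (intro prod.cong) auto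
        then show "Uc j \<beta> * mon W \<beta> (m(0:=T0)) = (Uc j \<beta> * T0 ^ \<beta> 0) * mon V (\<beta>(0:=0)) m"
          unfolding W_def mon_insert[OF fV(1,2)] by simp
      qed
      finally show ?thesis .
    qed
    have "rep V D (\<lambda>m. \<Sum>\<beta>\<in>B. (Uc j \<beta> * T0 ^ \<beta> 0) * mon V (\<beta>(0:=0)) m)"
    proof (rule rep_sum[OF fB(1)])
      fix \<beta> assume b: "\<beta> \<in> B"
      show "rep V D (\<lambda>m. (Uc j \<beta> * T0 ^ \<beta> 0) * mon V (\<beta>(0:=0)) m)"
        by (rule rep_mono_term) (use b in \<open>auto simp: B_def box_def W_def\<close>)
    qed
    then show ?thesis using e by simp
  qed
  have "rep V (\<Sum>j\<in>X. D) Cf"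
    unfolding Cf_def[abs_def] by (rule rep_prod[OF fX(1) repfac])
  then obtain c where c: "is_mpoly V c" "Cf = mpoly_eval V c"
    unfolding rep_def by blast
  have "z0(0:=T0) = z0" by (simp add: T0_def)
  then have "Cf z0 \<noteq> 0" using z0 fX(1) by (simp add: Cf_def)
  then have cnz: "c \<noteq> (\<lambda>_. 0)" using c(2) eval_zero by metis
  have fin: "finite (moment_solutions k lam m)" if cm: "mpoly_eval V c m \<noteq> 0" for m
  proof -
    have nz: "mpoly_eval W (Uc j) (m(0:=T0)) \<noteq> 0" if "j \<in> X" for j
    proof
      assume "mpoly_eval W (Uc j) (m(0:=T0)) = 0"
      then have "Cf m = 0" unfolding Cf_def using fX(1) that by (auto simp: prod_zero_iff)
      then show False using cm c(2) by simp
    qed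
    define p where "p j = (\<Sum>\<alpha>\<in>{\<alpha>. Uc j \<alpha> \<noteq> 0}. monom (Uc j \<alpha> * mon V \<alpha> m) (\<alpha> 0))" for j
    have pe: "mpoly_eval W (Uc j) (m(0:=t)) = poly (p j) t" for j t
      unfolding W_def p_def by (rule slice[OF fV(1,2)])
    define R where "R j = {t. poly (p j) t = 0}" for j
    have fR: "finite (R j)" if "j \<in> X" for j
    proof -
      have "p j \<noteq> 0" using nz[OF that] pe[of j T0] by auto
      then show ?thesis unfolding R_def by (rule poly_roots_finite)
    qed
    have inR: "mu l \<in> R l \<and> s \<in> R 0" if sol: "(mu, s) \<in> moment_solutions k lam m" and l: "l \<in> {1..k}" for mu s l
    proof -
      define x where "x = (\<lambda>i. if i = 0 then s else mu i)"
      have Fx: "F i x = m i" if "i \<in> V" for i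
      proof -
        have "F i x = (\<Sum>l=1..k. lam l * gmom i (mu l) s)"
          unfolding F_def x_def by (intro sum.cong) auto
        then show ?thesis using sol that by (auto simp: moment_solutions_def V_def)
      qed
      have root: "x j \<in> R j" if "j \<in> X" for j
      proof -
        have "mpoly_eval W (Uc j) (m(0 := x j)) = mpoly_eval W (Uc j) (zz j x)"
          by (rule eval_cong) (auto simp: W_def zz_def Fx)
        then have "poly (p j) (x j) = 0" using rel[OF that] pe by simp
        then show ?thesis by (simp add: R_def)
      qed
      have "l \<in> X" "l \<noteq> 0" using l by (auto simp: X_def)
      then show ?thesis using root[of l] root[OF fX(3)] by (simp add: x_def)
    qed
    have "moment_solutions k lam m \<subseteq>
        (\<lambda>(f, s). (\<lambda>l. if l \<in> {1..k} then f l else 0, s)) ` (PiE {1..k} R \<times> R 0)"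
    proof
      fix y assume y: "y \<in> moment_solutions k lam m"
      obtain mu s where ms: "y = (mu, s)" by force
      have z: "mu l = 0" if "l \<notin> {1..k}" for l using y ms that by (auto simp: moment_solutions_def)
      have "mu = (\<lambda>l. if l \<in> {1..k} then restrict mu {1..k} l else 0)"
        using z by (auto simp: fun_eq_iff)
      moreover have "(restrict mu {1..k}, s) \<in> PiE {1..k} R \<times> R 0"
        using inR[of mu s] y ms assms(1) by auto
      ultimately show "y \<in> (\<lambda>(f, s). (\<lambda>l. if l \<in> {1..k} then f l else 0, s)) ` (PiE {1..k} R \<times> R 0)"
        using ms by (auto intro!: image_eqI[where x = "(restrict mu {1..k}, s)"])
    qed
    moreover have "finite (PiE {1..k} R \<times> R 0)"
      using fR fX(3) by (intro finite_cartesian_product finite_PiE) (auto simp: X_def)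
    ultimately show ?thesis by (rule finite_subset[OF _ finite_imageI])
  qed
  show ?thesis unfolding generic_on_def
    using c(1) cnz fin by (auto simp: V_def)
qed

end
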